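(* Fix reals $0<\varepsilon<1$ and $c\ge 12/\varepsilon$, and let $S$ be a set produced by the construction described in the context (with any choices allowed there). Then for all integers $m<n$ with $n$ sufficiently large and $Q_m$ defined, the number of collinear triples consisting of two points of $S\cap Q_m$ and one lattice point of $Q_n$ is at most $$\frac{8\cdot2^{m+n}}{c^{3}n^{2+2\varepsilon}m^{1+\varepsilon}}\cdot n.$$
   Context: Construction. Fix $0<\varepsilon<1$ and $c\ge 12/\varepsilon$. For each sufficiently large integer $n$ (say $n\ge n_0$), let $s_n=\left\lfloor\frac{2^n}{cn^{1+\varepsilon}}\right\rfloor$, $Y_n=\left\lfloor\frac{2^n}{n^{\varepsilon}}\right\rfloor$, and let $Q_n=[2^n,2^n+s_n]\times[Y_n-s_n,Y_n]$ be the axis-parallel square with side $s_n$ and top left corner $(2^n,Y_n)$. Let $p_n$ be the largest prime smaller than $s_n$. For integers $a,b$, let $\mathcal{P}_n(a,b)=\{(2^n+x,\;Y_n-y): x,y\in\{0,\dots,p_n-1\},\ y\equiv (x-a)^2+b \pmod{p_n}\}$, a translated copy of the modular parabola $y=(x-a)^2+b \bmod p_n$ in $Q_n$. The set $S\subseteq\mathbb{Z}^2$ is built iteratively for $n=n_0,n_0+1,\dots$: given the already selected points $S_{<n}=S\cap\bigcup_{m<n}Q_m$, choose parameters $(a_n,b_n)\in\{0,\dots,p_n-1\}^2$ minimizing the number of collinear triples formed by points of $\mathcal{P}_n(a_n,b_n)\cup S_{<n}$ that contain points of both $\mathcal{P}_n(a_n,b_n)$ and $S_{<n}$; delete from $\mathcal{P}_n=\mathcal{P}_n(a_n,b_n)$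 one point of each such triple, and add the remaining points of $\mathcal{P}_n$ to $S$. Thus $S\cap Q_n\subseteq\mathcal{P}_n$. *)

theory Defs
  imports "HOL-Computational_Algebra.Primes" Complex_Main
begin

type_synonym pt = "int \<times> int"

definition side :: "real \<Rightarrow> real \<Rightarrow> nat \<Rightarrow> int" where
  "side eps c n = \<lfloor>2 ^ n / (c * real n powr (1 + eps))\<rfloor>"

definition Yn :: "real \<Rightarrow> nat \<Rightarrow> int" where
  "Yn eps n = \<lfloor>2 ^ n / real n powr eps\<rfloor>"

definition pn :: "real \<Rightarrow> real \<Rightarrow> nat \<Rightarrow> int" where
  "pn eps c n = (GREATEST q. prime q \<and> q < side eps c n)"

definition Qlat :: "real \<Rightarrow> real \<Rightarrow> nat \<Rightarrow> pt set" where
  "Qlat eps c n = {(x, y). 2 ^ n \<le> x \<and> x \<le> 2 ^ n + side eps c n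
                    \<and> Yn eps n - side eps c n \<le> y \<and> y \<le> Yn eps n}"

definition parab :: "real \<Rightarrow> real \<Rightarrow> nat \<Rightarrow> int \<Rightarrow> int \<Rightarrow> pt set" where
  "parab eps c n a b = {(2 ^ n + x, Yn eps n - y) | x y.
      0 \<le> x \<and> x < pn eps c n \<and> 0 \<le> y \<and> y < pn eps c n \<and>
      y mod pn eps c n = ((x - a)^2 + b) mod pn eps c n}"

definition collinear3 :: "pt \<Rightarrow> pt \<Rightarrow> pt \<Rightarrow> bool" where
  "collinear3 p q r \<longleftrightarrow>
     (fst q - fst p) * (snd r - snd p) = (snd q - snd p) * (fst r - fst p)"

definition mixed_triples :: "pt set \<Rightarrow> pt set \<Rightarrow> pt set set" where
  "mixed_triples P A = {T. \<exists>p q r. T = {p, q, r} \<and> card T = 3 \<and> T \<subseteq> P \<union> A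
       \<and> collinear3 p q r \<and> T \<inter> P \<noteq> {} \<and> T \<inter> A \<noteq> {}}"

text \<open>S is a set produced by the construction started at n0 (with some admissible
  choices of the parameters a_n, b_n and of the deleted points f_n T).\<close>
definition construction :: "real \<Rightarrow> real \<Rightarrow> nat \<Rightarrow> pt set \<Rightarrow> bool" where
  "construction eps c n0 S \<longleftrightarrow>
     (\<forall>n\<ge>n0. 3 \<le> side eps c n) \<and>
     S \<subseteq> (\<Union>n\<in>{n0..}. Qlat eps c n) \<and>
     (\<exists>a b :: nat \<Rightarrow> int. \<exists>f :: nat \<Rightarrow> pt set \<Rightarrow> pt. \<forall>n\<ge>n0.
        let Slt = S \<inter> (\<Union>k\<in>{n0..<n}. Qlat eps c k);
            P = parab eps c n (a n) (b n);
            M = mixed_triples P Slt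
        in 0 \<le> a n \<and> a n < pn eps c n \<and> 0 \<le> b n \<and> b n < pn eps c n
           \<and> (\<forall>a' b'. 0 \<le> a' \<and> a' < pn eps c n \<and> 0 \<le> b' \<and> b' < pn eps c n \<longrightarrow>
                 card M \<le> card (mixed_triples (parab eps c n a' b') Slt))
           \<and> (\<forall>T\<in>M. f n T \<in> T \<inter> P)
           \<and> S \<inter> Qlat eps c n = P - f n ` M)"

definition cross_triples :: "real \<Rightarrow> real \<Rightarrow> pt set \<Rightarrow> nat \<Rightarrow> nat \<Rightarrow> pt set set" where
  "cross_triples eps c S m n = {T. \<exists>p q r. T = {p, q, r} \<and> p \<noteq> q \<and>
       p \<in> S \<inter> Qlat eps c m \<and> q \<in> S \<inter> Qlat eps c m \<and> r \<in> Qlat eps c n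
       \<and> collinear3 p q r}"

end

theory Submission
  imports Defs "HOL-Real_Asymp.Real_Asymp"
begin

lemma card_int_real_interval:
  fixes \<alpha> \<beta> :: real
  shows "real (card {k::int. \<alpha> \<le> of_int k \<and> of_int k \<le> \<beta>}) \<le> max 0 (\<beta> - \<alpha> + 1)"
proof -
  have eq: "{k::int. \<alpha> \<le> of_int k \<and> of_int k \<le> \<beta>} = {\<lceil>\<alpha>\<rceil>..\<lfloor>\<beta>\<rfloor>}"
    by (auto simp: ceiling_le_iff le_floor_iff)
  have "real (card {\<lceil>\<alpha>\<rceil>..\<lfloor>\<beta>\<rfloor>}) = real (nat (\<lfloor>\<beta>\<rfloor> - \<lceil>\<alpha>\<rceil> + 1))" by simp
  also have "\<dots> = max 0 (of_int (\<lfloor>\<beta>\<rfloor> - \<lceil>\<alpha>\<rceil> + 1))" by simp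
  also have "\<dots> \<le> max 0 (\<beta> - \<alpha> + 1)"
    using of_int_floor_le[of \<beta>] le_of_int_ceiling[of \<alpha>] by (intro max.mono) linarith+
  finally show ?thesis using eq by simp
qed

lemma card_multiples:
  fixes lo t a c0 :: int
  assumes "a \<ge> 1" "t \<ge> 0"
  shows "real (card {x::int. lo \<le> x \<and> x \<le> lo + t \<and> a dvd (x - c0)}) \<le> real_of_int t / real_of_int a + 1"
proof -
  let ?K = "{k::int. real_of_int (lo - c0) / real_of_int a \<le> of_int k \<and> of_int k \<le> real_of_int (lo + t - c0) / real_of_int a}"
  have sub: "{x::int. lo \<le> x \<and> x \<le> lo + t \<and> a dvd (x - c0)} \<subseteq> (\<lambda>k. c0 + a * k) ` ?K"
  proof
    fix x assume x: "x \<in> {x::int. lo \<le> x \<and> x \<le> lo + t \<and> a dvd (x - c0)}"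
    then obtain k where k: "x - c0 = a * k" by (auto elim: dvdE)
    have ap: "real_of_int a > 0" using assms by simp
    have "real_of_int (lo - c0) \<le> real_of_int a * of_int k" using x k by (simp add: of_int_mult[symmetric] del: of_int_mult)
    moreover have "real_of_int a * of_int k \<le> real_of_int (lo + t - c0)" using x k by (simp add: of_int_mult[symmetric] del: of_int_mult)
    ultimately have "k \<in> ?K" using ap by (simp add: divide_le_eq le_divide_eq mult.commute)
    moreover have "x = c0 + a * k" using k by simp
    ultimately show "x \<in> (\<lambda>k. c0 + a * k) ` ?K" by blast
  qed
  have fin: "finite ?K"
  proof -
    have "?K = {\<lceil>real_of_int (lo - c0) / real_of_int a\<rceil>..\<lfloor>real_of_int (lo + t - c0) / real_of_int a\<rfloor>}"
      by (auto simp: ceiling_le_iff le_floor_iff)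
    then show ?thesis by simp
  qed
  have "card {x::int. lo \<le> x \<and> x \<le> lo + t \<and> a dvd (x - c0)} \<le> card ((\<lambda>k. c0 + a * k) ` ?K)"
    by (rule card_mono[OF finite_imageI[OF fin] sub])
  also have "\<dots> \<le> card ?K" by (rule card_image_le[OF fin])
  finally have "real (card {x::int. lo \<le> x \<and> x \<le> lo + t \<and> a dvd (x - c0)}) \<le> real (card ?K)" by simp
  also have "\<dots> \<le> max 0 (real_of_int (lo + t - c0) / real_of_int a - real_of_int (lo - c0) / real_of_int a + 1)"
    by (rule card_int_real_interval)
  also have "\<dots> = real_of_int t / real_of_int a + 1"
    using assms by (simp add: diff_divide_distrib[symmetric] add_nonneg_nonneg)
  finally show ?thesis .
qed

lemma harm_pow2: "(\<Sum>b=1..(2::nat)^k. 1 / real b) \<le> real k + 1"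
proof (induction k)
  case 0 then show ?case by simp
next
  case (Suc k)
  have split: "(\<Sum>b=1..(2::nat)^Suc k. 1 / real b) = (\<Sum>b=1..2^k. 1 / real b) + (\<Sum>b=2^k+1..2^k+2^k. 1 / real b)"
    using sum.ub_add_nat[of 1 "2^k" "\<lambda>b. 1 / real b" "2^k"] by (simp add: mult_2)
  have "(\<Sum>b=2^k+1..2^k+2^k. 1 / real b) \<le> (\<Sum>b=(2::nat)^k+1..2^k+2^k. 1 / real ((2::nat)^k))"
    by (intro sum_mono) (auto simp: field_simps)
  also have "\<dots> = 1" by simp
  finally show ?case using split Suc by simp
qed

lemma harm_bound:
  fixes B :: int
  assumes "B \<le> 2 ^ n"
  shows "(\<Sum>b\<in>{1..B}. 1 / real_of_int b) \<le> real n + 1"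
proof -
  have "{1..B} = int ` {1..nat B}" using image_int_atLeastAtMost[of 1 "nat B"] by (cases "B \<ge> 0") auto
  then have "(\<Sum>b\<in>{1..B}. 1 / real_of_int b) = (\<Sum>b\<in>{1..nat B}. 1 / real b)"
    by (simp add: sum.reindex)
  also have "\<dots> \<le> (\<Sum>b\<in>{1..(2::nat)^n}. 1 / real b)"
  proof (rule sum_mono2)
    have "nat B \<le> 2 ^ n" using assms by (simp add: nat_le_iff)
    then show "{1..nat B} \<subseteq> {1..(2::nat)^n}" by auto
  qed auto
  also have "\<dots> \<le> real n + 1" by (rule harm_pow2)
  finally show ?thesis .
qed

lemma sum_inv_sq_nat: "B \<ge> 1 \<Longrightarrow> (\<Sum>b=1..B. 1 / (real b)^2) \<le> 2 - 1 / real B"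
proof (induction B rule: dec_induct)
  case base then show ?case by simp
next
  case (step B)
  have "(\<Sum>b=1..Suc B. 1 / (real b)^2) = (\<Sum>b=1..B. 1 / (real b)^2) + 1 / (real B + 1)^2" by simp
  also have "\<dots> \<le> 2 - 1 / real B + 1 / (real B + 1)^2" using step by simp
  also have "\<dots> \<le> 2 - 1 / (real B + 1)"
  proof -
    have B: "real B \<ge> 1" using step by simp
    have "1 / (real B + 1)^2 + 1 / (real B + 1) \<le> 1 / real B"
      using B by (simp add: divide_simps power2_eq_square) (simp add: algebra_simps)
    then show ?thesis by simp
  qed
  finally show ?case by (simp add: add.commute)
qed

lemma sum_inv_sq:
  fixes B :: int
  shows "(\<Sum>b\<in>{1..B}. 1 / (real_of_int b)^2) \<le> 2"
proof -
  have "{1..B} = int ` {1..nat B}" using image_int_atLeastAtMost[of 1 "nat B"] by (cases "B \<ge> 0") auto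
  then have "(\<Sum>b\<in>{1..B}. 1 / (real_of_int b)^2) = (\<Sum>b\<in>{1..nat B}. 1 / (real b)^2)"
    by (simp add: sum.reindex)
  also have "\<dots> \<le> 2"
  proof (cases "nat B \<ge> 1")
    case True then show ?thesis using sum_inv_sq_nat[OF True]
      by (smt (verit) of_nat_0_le_iff divide_nonneg_nonneg)
  next
    case False then have "nat B = 0" by simp
    then show ?thesis by simp
  qed
  finally show ?thesis .
qed

lemma stepE_inner:
  fixes s Xlo Xhi Ylo Yhi b :: int
  assumes "Xlo > 0" "Ylo > 0" "Ylo \<le> Yhi" "Xlo \<le> Xhi" "b \<ge> 1"
  shows "(\<Sum>a\<in>{a. 1 \<le> a \<and> a \<le> s \<and> b*Xlo \<le> a*Yhi \<and> a*Ylo \<le> b*Xhi}. 1 / (real_of_int a)^2)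
     \<le> (real_of_int b * (real_of_int Xhi / real_of_int Ylo - real_of_int Xlo / real_of_int Yhi) + 1)
        * (real_of_int Yhi / (real_of_int b * real_of_int Xlo))^2"
proof -
  let ?A = "{a. 1 \<le> a \<and> a \<le> s \<and> b*Xlo \<le> a*Yhi \<and> a*Ylo \<le> b*Xhi}"
  define xl where "xl = real_of_int Xlo"
  define xh where "xh = real_of_int Xhi"
  define yl where "yl = real_of_int Ylo"
  define yh where "yh = real_of_int Yhi"
  define bb where "bb = real_of_int b"
  have pos: "xl > 0" "yl > 0" "yh > 0" "bb \<ge> 1" "yl \<le> yh" "xl \<le> xh"
    using assms by (auto simp: xl_def xh_def yl_def yh_def bb_def)
  have finA: "finite ?A" by (rule finite_subset[of _ "{1..s}"]) auto
  have sub: "?A \<subseteq> {k::int. bb * xl / yh \<le> of_int k \<and> of_int k \<le> bb * xh / yl}"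
  proof
    fix a assume a: "a \<in> ?A"
    then have "b*Xlo \<le> a*Yhi" "a*Ylo \<le> b*Xhi" by auto
    then have "bb * xl \<le> of_int a * yh" "of_int a * yl \<le> bb * xh"
      unfolding xl_def xh_def yl_def yh_def bb_def by (simp_all add: of_int_mult[symmetric] del: of_int_mult)
    then show "a \<in> {k::int. bb * xl / yh \<le> of_int k \<and> of_int k \<le> bb * xh / yl}"
      using pos by (simp add: divide_le_eq le_divide_eq)
  qed
  have finK: "finite {k::int. bb * xl / yh \<le> of_int k \<and> of_int k \<le> bb * xh / yl}"
  proof -
    have "{k::int. bb * xl / yh \<le> of_int k \<and> of_int k \<le> bb * xh / yl} = {\<lceil>bb * xl / yh\<rceil>..\<lfloor>bb * xh / yl\<rfloor>}"
      by (auto simp: ceiling_le_iff le_floor_iff)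
    then show ?thesis by simp
  qed
  have D: "xh / yl - xl / yh \<ge> 0"
  proof -
    have "xl / yh \<le> xh / yh" using pos by (simp add: divide_right_mono)
    also have "\<dots> \<le> xh / yl" using pos by (intro divide_left_mono) auto
    finally show ?thesis by simp
  qed
  have "real (card ?A) \<le> real (card {k::int. bb * xl / yh \<le> of_int k \<and> of_int k \<le> bb * xh / yl})"
    using card_mono[OF finK sub] by simp
  also have "\<dots> \<le> max 0 (bb * xh / yl - bb * xl / yh + 1)" by (rule card_int_real_interval)
  also have "\<dots> = bb * (xh / yl - xl / yh) + 1"
  proof -
    have "bb * (xh / yl - xl / yh) \<ge> 0" using D pos by simp
    then show ?thesis by (simp add: right_diff_distrib)
  qed
  finally have cardA: "real (card ?A) \<le> bb * (xh / yl - xl / yh) + 1" .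
  have each: "1 / (real_of_int a)^2 \<le> (yh / (bb * xl))^2" if "a \<in> ?A" for a
  proof -
    have "of_int a \<ge> bb * xl / yh" using sub that by auto
    moreover have "bb * xl / yh > 0" using pos by simp
    ultimately have "1 / of_int a \<le> 1 / (bb * xl / yh)" by (metis le_imp_inverse_le inverse_eq_divide)
    also have "\<dots> = yh / (bb * xl)" by simp
    finally have "1 / real_of_int a \<le> yh / (bb * xl)" .
    moreover have "0 \<le> 1 / real_of_int a" using that by auto
    ultimately have "(1 / real_of_int a)^2 \<le> (yh / (bb * xl))^2" by (rule power_mono)
    then show ?thesis by (simp add: power_divide)
  qed
  have "(\<Sum>a\<in>?A. 1 / (real_of_int a)^2) \<le> real (card ?A) * (yh / (bb * xl))^2"
    using sum_bounded_above[of ?A "\<lambda>a. 1 / (real_of_int a)^2" "(yh / (bb * xl))^2"] each by simp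
  also have "\<dots> \<le> (bb * (xh / yl - xl / yh) + 1) * (yh / (bb * xl))^2"
    by (rule mult_right_mono[OF cardA]) simp
  finally show ?thesis unfolding xl_def xh_def yl_def yh_def bb_def .
qed

lemma stepE:
  fixes s Xlo Xhi Ylo Yhi :: int and n :: nat
  assumes "Xlo > 0" "Ylo > 0" "Ylo \<le> Yhi" "Xlo \<le> Xhi" "s \<le> 2 ^ n"
  shows "(\<Sum>b\<in>{1..s}. \<Sum>a\<in>{a. 1 \<le> a \<and> a \<le> s \<and> b*Xlo \<le> a*Yhi \<and> a*Ylo \<le> b*Xhi}. 1 / (real_of_int a)^2)
     \<le> (real_of_int Yhi / real_of_int Xlo)^2 * ((real_of_int Xhi / real_of_int Ylo - real_of_int Xlo / real_of_int Yhi) * (real n + 1) + 2)"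
proof -
  define K where "K = (real_of_int Yhi / real_of_int Xlo)^2"
  define \<Delta> where "\<Delta> = real_of_int Xhi / real_of_int Ylo - real_of_int Xlo / real_of_int Yhi"
  have D: "\<Delta> \<ge> 0"
  proof -
    have "real_of_int Xlo / real_of_int Yhi \<le> real_of_int Xhi / real_of_int Yhi" using assms by (simp add: divide_right_mono)
    also have "\<dots> \<le> real_of_int Xhi / real_of_int Ylo" using assms by (intro divide_left_mono) auto
    finally show ?thesis by (simp add: \<Delta>_def)
  qed
  have "(\<Sum>b\<in>{1..s}. \<Sum>a\<in>{a. 1 \<le> a \<and> a \<le> s \<and> b*Xlo \<le> a*Yhi \<and> a*Ylo \<le> b*Xhi}. 1 / (real_of_int a)^2)
     \<le> (\<Sum>b\<in>{1..s}. (real_of_int b * \<Delta> + 1) * (real_of_int Yhi / (real_of_int b * real_of_int Xlo))^2)"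
    unfolding \<Delta>_def by (intro sum_mono stepE_inner) (use assms in auto)
  also have "\<dots> = (\<Sum>b\<in>{1..s}. K * \<Delta> * (1 / real_of_int b) + K * (1 / (real_of_int b)^2))"
  proof (intro sum.cong refl)
    fix b assume "b \<in> {1..s}"
    then have "real_of_int b \<noteq> 0" by auto
    moreover have "real_of_int Xlo \<noteq> 0" using assms by simp
    ultimately show "(real_of_int b * \<Delta> + 1) * (real_of_int Yhi / (real_of_int b * real_of_int Xlo))^2
        = K * \<Delta> * (1 / real_of_int b) + K * (1 / (real_of_int b)^2)"
      unfolding K_def by (simp add: field_simps power2_eq_square)
  qed
  also have "\<dots> = K * \<Delta> * (\<Sum>b\<in>{1..s}. 1 / real_of_int b) + K * (\<Sum>b\<in>{1..s}. 1 / (real_of_int b)^2)"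
    by (simp add: sum.distrib sum_distrib_left)
  also have "\<dots> \<le> K * \<Delta> * (real n + 1) + K * 2"
    using harm_bound[OF assms(5)] sum_inv_sq[of s] D
    by (intro add_mono mult_left_mono) (auto simp: K_def)
  finally show ?thesis unfolding K_def \<Delta>_def by (simp add: algebra_simps)
qed

lemma stepD:
  fixes s Xlo Xhi Ylo Yhi :: int
  assumes "Xlo > 0" "Ylo > 0" "Yhi \<le> Xlo" "s \<ge> 0"
  shows "(\<Sum>d\<in>{(dx,dy). 1 \<le> dx \<and> dx \<le> s \<and> 1 \<le> dy \<and> dy*Xlo \<le> dx*Yhi \<and> dx*Ylo \<le> dy*Xhi}.
            real_of_int (gcd (fst d) (snd d)) / real_of_int (fst d))
     \<le> real_of_int s * (\<Sum>b\<in>{1..s}. \<Sum>a\<in>{a. 1 \<le> a \<and> a \<le> s \<and> b*Xlo \<le> a*Yhi \<and> a*Ylo \<le> b*Xhi}. 1 / (real_of_int a)^2)"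
proof -
  define D where "D = {(dx,dy). 1 \<le> dx \<and> dx \<le> s \<and> 1 \<le> dy \<and> dy*Xlo \<le> dx*Yhi \<and> dx*Ylo \<le> dy*Xhi}"
  define A where "A = (\<lambda>b. {a. 1 \<le> a \<and> a \<le> s \<and> b*Xlo \<le> a*Yhi \<and> a*Ylo \<le> b*Xhi})"
  define \<psi> where "\<psi> = (\<lambda>d::int\<times>int. ((snd d div gcd (fst d) (snd d), fst d div gcd (fst d) (snd d)), gcd (fst d) (snd d)))"
  define T where "T = Sigma (Sigma {1..s} A) (\<lambda>ba. {1..s div snd ba})"
  have finA: "finite (A b)" for b unfolding A_def by (rule finite_subset[of _ "{1..s}"]) auto
  have finT: "finite T" unfolding T_def using finA by auto
  have key: "\<psi> d \<in> T \<and> real_of_int (gcd (fst d) (snd d)) / real_of_int (fst d) = 1 / real_of_int (snd (fst (\<psi> d)))"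
    if d: "d \<in> D" for d
  proof -
    obtain dx dy where dd: "d = (dx, dy)" by force
    have h: "1 \<le> dx" "dx \<le> s" "1 \<le> dy" "dy*Xlo \<le> dx*Yhi" "dx*Ylo \<le> dy*Xhi" using d dd by (auto simp: D_def)
    define g where "g = gcd dx dy"
    define a where "a = dx div g"
    define b where "b = dy div g"
    have gpos: "g > 0" using h by (simp add: g_def)
    have dxe: "dx = g * a" unfolding a_def g_def by simp
    have dye: "dy = g * b" unfolding b_def g_def by simp
    have "0 < g * a" using h(1) dxe by simp
    then have "a > 0" using gpos zero_less_mult_pos by blast
    then have apos: "a \<ge> 1" by simp
    have "0 < g * b" using h(3) dye by simp
    then have "b > 0" using gpos zero_less_mult_pos by blast
    then have bpos: "b \<ge> 1" by simp
    have "g * (b * Xlo) \<le> g * (a * Yhi)" using h(4) dxe dye by (simp add: mult.assoc)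
    then have c1: "b * Xlo \<le> a * Yhi" using gpos by simp
    have "g * (a * Ylo) \<le> g * (b * Xhi)" using h(5) dxe dye by (simp add: mult.assoc)
    then have c2: "a * Ylo \<le> b * Xhi" using gpos by simp
    have "a \<le> dx" using dxe gpos apos by (smt (verit) mult_le_cancel_right1)
    then have as: "a \<le> s" using h by simp
    have "b * Xlo \<le> a * Xlo" using c1 assms apos by (smt (verit) mult_left_mono)
    then have "b \<le> a" using assms by simp
    then have bs: "b \<le> s" using as by simp
    have "g * a \<le> s" using h dxe by simp
    then have "g \<le> s div a" using apos by (simp add: zdiv_mono1[of "g*a" s a, simplified] )
    then have "\<psi> d \<in> T" unfolding T_def A_def \<psi>_def dd using apos bpos as bs c1 c2 gpos
      by (simp add: g_def[symmetric] a_def[symmetric] b_def[symmetric])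
    moreover have "real_of_int g / real_of_int dx = 1 / real_of_int a"
      using dxe gpos by simp
    ultimately show ?thesis unfolding \<psi>_def dd by (simp add: g_def[symmetric] a_def[symmetric])
  qed
  have inj: "inj_on \<psi> D"
  proof (rule inj_onI)
    fix d e assume "d \<in> D" "e \<in> D" "\<psi> d = \<psi> e"
    then show "d = e" unfolding \<psi>_def
      by (metis (no_types, lifting) dvd_div_mult_self gcd_dvd1 gcd_dvd2 prod.collapse prod.inject)
  qed
  have "(\<Sum>d\<in>D. real_of_int (gcd (fst d) (snd d)) / real_of_int (fst d)) = (\<Sum>d\<in>D. 1 / real_of_int (snd (fst (\<psi> d))))"
    using key by (intro sum.cong) auto
  also have "\<dots> = (\<Sum>z\<in>\<psi> ` D. 1 / real_of_int (snd (fst z)))"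
    using inj by (simp add: sum.reindex)
  also have "\<dots> \<le> (\<Sum>z\<in>T. 1 / real_of_int (snd (fst z)))"
  proof (rule sum_mono2[OF finT])
    show "\<psi> ` D \<subseteq> T" using key by auto
    show "\<And>z. z \<in> T - \<psi> ` D \<Longrightarrow> 0 \<le> 1 / real_of_int (snd (fst z))"
      unfolding T_def A_def by auto
  qed
  also have "\<dots> = (\<Sum>ba\<in>Sigma {1..s} A. \<Sum>g\<in>{1..s div snd ba}. 1 / real_of_int (snd ba))"
    unfolding T_def by (subst sum.Sigma) (use finA in \<open>auto simp: split_def\<close>)
  also have "\<dots> \<le> (\<Sum>ba\<in>Sigma {1..s} A. real_of_int s * (1 / (real_of_int (snd ba))^2))"
  proof (intro sum_mono)
    fix ba assume ba: "ba \<in> Sigma {1..s} A"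
    then have a1: "snd ba \<ge> 1" unfolding A_def by auto
    have "(\<Sum>g\<in>{1..s div snd ba}. 1 / real_of_int (snd ba)) = real_of_int (s div snd ba) * (1 / real_of_int (snd ba))"
      using assms a1 by (simp add: pos_imp_zdiv_nonneg_iff)
    also have "\<dots> \<le> (real_of_int s / real_of_int (snd ba)) * (1 / real_of_int (snd ba))"
      using a1 by (intro mult_right_mono) (auto simp: real_of_int_div4)
    also have "\<dots> = real_of_int s * (1 / (real_of_int (snd ba))^2)" by (simp add: power2_eq_square)
    finally show "(\<Sum>g\<in>{1..s div snd ba}. 1 / real_of_int (snd ba)) \<le> real_of_int s * (1 / (real_of_int (snd ba))^2)" .
  qed
  also have "\<dots> = real_of_int s * (\<Sum>b\<in>{1..s}. \<Sum>a\<in>A b. 1 / (real_of_int a)^2)"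
  proof -
    have "(\<Sum>b\<in>{1..s}. \<Sum>a\<in>A b. real_of_int s * (1 / (real_of_int a)^2)) = (\<Sum>ba\<in>Sigma {1..s} A. real_of_int s * (1 / (real_of_int (snd ba))^2))"
      using sum.Sigma[of "{1..s}" A "\<lambda>b a. real_of_int s * (1 / (real_of_int a)^2)"] finA by (simp add: split_def)
    then show ?thesis by (simp add: sum_distrib_left)
  qed
  finally show ?thesis unfolding D_def A_def .
qed

lemma collinear3_swap: "collinear3 q p r \<longleftrightarrow> collinear3 p q r"
  unfolding collinear3_def by algebra

lemma coll_dvd:
  fixes dx dy X Y :: int
  assumes "dx * Y = dy * X" "dx \<ge> 1"
  shows "(dx div gcd dx dy) dvd X"
proof -
  define g where "g = gcd dx dy"
  have gpos: "g > 0" using assms by (simp add: g_def)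
  have "g * ((dx div g) * Y) = g * ((dy div g) * X)"
    using assms(1) unfolding g_def by (simp add: mult.assoc[symmetric])
  then have e: "(dx div g) * Y = (dy div g) * X" using gpos by simp
  have cop: "coprime (dx div g) (dy div g)" unfolding g_def using assms by (intro div_gcd_coprime) auto
  have "(dx div g) dvd (dy div g) * X" using e by (metis dvd_triv_left)
  then show ?thesis using cop unfolding g_def by (simp add: coprime_dvd_mult_right_iff)
qed

lemma stepBC:
  fixes A R :: "(int \<times> int) set" and x0 y0 x1 y1 s t :: int
  assumes finA: "finite A"
    and Abox: "\<And>p. p \<in> A \<Longrightarrow> x0 \<le> fst p \<and> fst p \<le> x0 + s \<and> y0 - s \<le> snd p \<and> snd p \<le> y0"
    and Rdef: "R = {(x, y). x1 \<le> x \<and> x \<le> x1 + t \<and> y1 - t \<le> y \<and> y \<le> y1}"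
    and distx: "\<And>p q. p \<in> A \<Longrightarrow> q \<in> A \<Longrightarrow> fst p = fst q \<Longrightarrow> p = q"
    and uniq: "\<And>p q p' q'. p \<in> A \<Longrightarrow> q \<in> A \<Longrightarrow> p' \<in> A \<Longrightarrow> q' \<in> A \<Longrightarrow> fst p < fst q \<Longrightarrow>
                 fst q - fst p = fst q' - fst p' \<Longrightarrow> snd q - snd p = snd q' - snd p' \<Longrightarrow> p = p'"
    and Xlo: "x1 - x0 - s > 0" and Ylo: "y1 - t - y0 > 0" and t0: "t \<ge> 0" and s0: "s \<ge> 0"
  shows "real (card {T. \<exists>p q r. T = {p, q, r} \<and> p \<noteq> q \<and> p \<in> A \<and> q \<in> A \<and> r \<in> R \<and> collinear3 p q r})
     \<le> real_of_int (t + s) * (\<Sum>d\<in>{(dx,dy). 1 \<le> dx \<and> dx \<le> s \<and> 1 \<le> dy \<and> dy*(x1 - x0 - s) \<le> dx*(y1 - y0 + s) \<and> dx*(y1 - t - y0) \<le> dy*(x1 + t - x0)}.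
            real_of_int (gcd (fst d) (snd d)) / real_of_int (fst d))"
proof -
  define Xl Xh Yl Yh where defs: "Xl = x1 - x0 - s" "Xh = x1 + t - x0" "Yl = y1 - t - y0" "Yh = y1 - y0 + s"
  define D where "D = {(dx,dy). 1 \<le> dx \<and> dx \<le> s \<and> 1 \<le> dy \<and> dy*Xl \<le> dx*Yh \<and> dx*Yl \<le> dy*Xh}"
  define Tup where "Tup = {(p,q,r). p \<in> A \<and> q \<in> A \<and> fst p < fst q \<and> r \<in> R \<and> collinear3 p q r}"
  define dif where "dif = (\<lambda>z::(int\<times>int)\<times>(int\<times>int)\<times>(int\<times>int). (fst (fst (snd z)) - fst (fst z), snd (fst (snd z)) - snd (fst z)))"
  define \<phi> where "\<phi> = (\<lambda>z::(int\<times>int)\<times>(int\<times>int)\<times>(int\<times>int). (dif z, fst (snd (snd z))))"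
  define Rd where "Rd = (\<lambda>d. (\<lambda>z. fst (snd (snd z))) ` {z\<in>Tup. dif z = d})"
  have finR: "finite R"
  proof -
    have "R \<subseteq> {x1..x1+t} \<times> {y1-t..y1}" unfolding Rdef by auto
    then show ?thesis by (rule finite_subset) auto
  qed
  have finTup: "finite Tup"
    by (rule finite_subset[of _ "A \<times> A \<times> R"]) (auto simp: Tup_def finA finR)
  have finD: "finite D"
  proof (rule finite_subset[of _ "{1..s} \<times> {1..s*Yh}"])
    show "D \<subseteq> {1..s} \<times> {1..s*Yh}"
    proof
      fix d assume "d \<in> D"
      then obtain a b where ab: "d = (a,b)" "1 \<le> a" "a \<le> s" "1 \<le> b" "b * Xl \<le> a * Yh" by (auto simp: D_def)
      have Xl1: "Xl \<ge> 1" using Xlo by (simp add: defs)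
      have "b \<le> b * Xl" using ab Xl1 by simp
      also have "\<dots> \<le> a * Yh" using ab by simp
      finally have bY: "b \<le> a * Yh" .
      then have "a * Yh \<ge> 1" using ab by simp
      then have "Yh \<ge> 0" using ab by (smt (verit) mult_nonneg_nonpos)
      then have "a * Yh \<le> s * Yh" using ab by (intro mult_right_mono) auto
      then show "d \<in> {1..s} \<times> {1..s*Yh}" using ab bY by auto
    qed
  qed auto
  have sub1: "{T. \<exists>p q r. T = {p, q, r} \<and> p \<noteq> q \<and> p \<in> A \<and> q \<in> A \<and> r \<in> R \<and> collinear3 p q r}
      \<subseteq> (\<lambda>(p,q,r). {p,q,r}) ` Tup"
  proof
    fix T assume "T \<in> {T. \<exists>p q r. T = {p, q, r} \<and> p \<noteq> q \<and> p \<in> A \<and> q \<in> A \<and> r \<in> R \<and> collinear3 p q r}"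
    then obtain p q r where h: "T = {p,q,r}" "p \<noteq> q" "p \<in> A" "q \<in> A" "r \<in> R" "collinear3 p q r" by blast
    have "fst p \<noteq> fst q" using h distx by blast
    then consider "fst p < fst q" | "fst q < fst p" by linarith
    then show "T \<in> (\<lambda>(p,q,r). {p,q,r}) ` Tup"
    proof cases
      case 1
      then have "(p,q,r) \<in> Tup" using h by (simp add: Tup_def)
      moreover have "T = (\<lambda>(p,q,r). {p,q,r}) (p,q,r)" using h by simp
      ultimately show ?thesis by (intro image_eqI)
    next
      case 2
      then have "(q,p,r) \<in> Tup" using h collinear3_swap by (simp add: Tup_def)
      moreover have "T = (\<lambda>(p,q,r). {p,q,r}) (q,p,r)" using h by auto
      ultimately show ?thesis by (intro image_eqI)
    qed
  qed
  have "card {T. \<exists>p q r. T = {p, q, r} \<and> p \<noteq> q \<and> p \<in> A \<and> q \<in> A \<and> r \<in> R \<and> collinear3 p q r} \<le> card Tup"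
    using card_mono[OF finite_imageI[OF finTup] sub1] card_image_le[OF finTup, of "\<lambda>(p,q,r). {p,q,r}"] by linarith
  have memD: "dif z \<in> D" and collz: "fst (dif z) * (snd (snd (snd z)) - snd (fst z)) = snd (dif z) * (fst (snd (snd z)) - fst (fst z))"
    if z: "z \<in> Tup" for z
  proof -
    obtain p q r where zz: "z = (p,q,r)" by (cases z) auto
    have h: "p \<in> A" "q \<in> A" "fst p < fst q" "r \<in> R" "collinear3 p q r" using z zz by (auto simp: Tup_def)
    define dx dy X Y where dd: "dx = fst q - fst p" "dy = snd q - snd p" "X = fst r - fst p" "Y = snd r - snd p"
    have coll: "dx * Y = dy * X" using h(5) by (simp add: collinear3_def dd)
    have dx1: "1 \<le> dx" "dx \<le> s" using h(3) Abox[OF h(1)] Abox[OF h(2)] by (auto simp: dd)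
    have XY: "Xl \<le> X" "X \<le> Xh" "Yl \<le> Y" "Y \<le> Yh" using Abox[OF h(1)] h(4) by (auto simp: dd defs Rdef)
    have Xpos: "X > 0" "Yl > 0" "Xl > 0" using XY Xlo Ylo by (auto simp: defs)
    have "dy * X > 0"
    proof -
      have "dx * Y \<ge> 1 * Y" using dx1 XY Xpos by (intro mult_right_mono) auto
      then show ?thesis using coll XY Xpos by linarith
    qed
    then have dy1: "dy \<ge> 1" using Xpos by (simp add: zero_less_mult_iff)
    have "dy * Xl \<le> dy * X" using dy1 XY by (intro mult_left_mono) auto
    also have "\<dots> = dx * Y" using coll by simp
    also have "\<dots> \<le> dx * Yh" using dx1 XY by (intro mult_left_mono) auto
    finally have c1: "dy * Xl \<le> dx * Yh" .
    have "dx * Yl \<le> dx * Y" using dx1 XY by (intro mult_left_mono) auto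
    also have "\<dots> = dy * X" using coll by simp
    also have "\<dots> \<le> dy * Xh" using dy1 XY by (intro mult_left_mono) auto
    finally have c2: "dx * Yl \<le> dy * Xh" .
    show "dif z \<in> D" unfolding D_def dif_def zz using dx1 dy1 c1 c2 by (simp add: dd)
    show "fst (dif z) * (snd (snd (snd z)) - snd (fst z)) = snd (dif z) * (fst (snd (snd z)) - fst (fst z))"
      using coll unfolding dif_def zz dd by simp
  qed
  have inj: "inj_on \<phi> Tup"
  proof (rule inj_onI)
    fix z w assume zw: "z \<in> Tup" "w \<in> Tup" "\<phi> z = \<phi> w"
    obtain p q r where zz: "z = (p,q,r)" by (cases z) auto
    obtain p' q' r' where ww: "w = (p',q',r')" by (cases w) auto
    have h: "p \<in> A" "q \<in> A" "fst p < fst q" "p' \<in> A" "q' \<in> A" using zw zz ww by (auto simp: Tup_def)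
    have e: "fst q - fst p = fst q' - fst p'" "snd q - snd p = snd q' - snd p'" "fst r = fst r'"
      using zw(3) zz ww by (auto simp: \<phi>_def dif_def)
    have pp: "p = p'" using uniq[OF h(1,2,4,5) h(3) e(1,2)] .
    then have "fst q = fst q'" using e by simp
    then have qq: "q = q'" using distx h by blast
    have c: "(fst q - fst p) * (snd r - snd p) = (snd q - snd p) * (fst r - fst p)"
      using collz[OF zw(1)] by (simp add: zz dif_def)
    have c': "(fst q - fst p) * (snd r' - snd p) = (snd q - snd p) * (fst r' - fst p)"
      using collz[OF zw(2)] by (simp add: ww dif_def pp qq)
    have "(fst q - fst p) * (snd r - snd p) = (fst q - fst p) * (snd r' - snd p)"
      using c c' e(3) by simp
    then have "snd r = snd r'" using h(3) by simp
    then have "r = r'" using e(3) by (simp add: prod_eq_iff)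
    then show "z = w" using zz ww pp qq by simp
  qed
  have finRd: "finite (Rd d)" for d unfolding Rd_def using finTup by auto
  have sub2: "\<phi> ` Tup \<subseteq> Sigma D Rd"
  proof
    fix w assume "w \<in> \<phi> ` Tup"
    then obtain z where z: "z \<in> Tup" "w = \<phi> z" by blast
    have "fst (snd (snd z)) \<in> Rd (dif z)" unfolding Rd_def using z by blast
    then show "w \<in> Sigma D Rd" using memD[OF z(1)] z by (simp add: \<phi>_def)
  qed
  have "card Tup = card (\<phi> ` Tup)" using card_image[OF inj] by simp
  also have "\<dots> \<le> card (Sigma D Rd)"
    by (rule card_mono[OF _ sub2]) (use finD finRd in auto)
  also have "\<dots> = (\<Sum>d\<in>D. card (Rd d))" using card_SigmaI[OF finD, of Rd] finRd by simp
  finally have cardTup: "card Tup \<le> (\<Sum>d\<in>D. card (Rd d))" .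
  have cardRd: "real (card (Rd d)) \<le> real_of_int (t + s) * (real_of_int (gcd (fst d) (snd d)) / real_of_int (fst d))"
    if d: "d \<in> D" for d
  proof -
    obtain dx dy where dd: "d = (dx, dy)" by force
    have h: "1 \<le> dx" "dx \<le> s" "1 \<le> dy" using d dd by (auto simp: D_def)
    define g where "g = gcd dx dy"
    define a where "a = dx div g"
    have "g > 0" using h by (simp add: g_def)
    then have gpos: "g \<ge> 1" by simp
    have dxe: "dx = g * a" unfolding a_def g_def by simp
    have "0 < g * a" using h(1) dxe by simp
    then have "a > 0" using \<open>g > 0\<close> zero_less_mult_pos by blast
    then have a1: "a \<ge> 1" by simp
    have bound1: "real (card (Rd d)) \<le> real_of_int t / real_of_int a + 1"
    proof (cases "{z\<in>Tup. dif z = d} = {}")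
      case True
      then have "Rd d = {}" unfolding Rd_def by simp
      then show ?thesis using t0 a1 by simp
    next
      case False
      then obtain z0 where z0: "z0 \<in> Tup" "dif z0 = d" by blast
      have sub: "Rd d \<subseteq> {x. x1 \<le> x \<and> x \<le> x1 + t \<and> a dvd (x - fst (fst z0))}"
      proof
        fix x assume "x \<in> Rd d"
        then obtain z where z: "z \<in> Tup" "dif z = d" "x = fst (snd (snd z))" unfolding Rd_def by auto
        obtain p q r where zz: "z = (p,q,r)" by (cases z) auto
        obtain p0 q0 r0 where zz0: "z0 = (p0,q0,r0)" by (cases z0) auto
        have hz: "p \<in> A" "q \<in> A" "fst p < fst q" "r \<in> R" using z zz by (auto simp: Tup_def)
        have hz0: "p0 \<in> A" "q0 \<in> A" using z0 zz0 by (auto simp: Tup_def)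
        have e: "fst q - fst p = fst q0 - fst p0" "snd q - snd p = snd q0 - snd p0"
          using z(2) z0(2) zz zz0 by (auto simp: dif_def)
        have pp: "p = p0" using uniq[OF hz(1,2) hz0 hz(3) e] .
        have c: "dx * (snd r - snd p) = dy * (fst r - fst p)"
          using collz[OF z(1)] z(2) by (simp add: zz dd)
        have "a dvd (fst r - fst p)" using coll_dvd[OF c h(1)] by (simp add: a_def g_def)
        moreover have "x1 \<le> fst r" "fst r \<le> x1 + t" using hz(4) by (auto simp: Rdef)
        ultimately show "x \<in> {x. x1 \<le> x \<and> x \<le> x1 + t \<and> a dvd (x - fst (fst z0))}"
          using z(3) zz zz0 pp by simp
      qed
      have "real (card (Rd d)) \<le> real (card {x. x1 \<le> x \<and> x \<le> x1 + t \<and> a dvd (x - fst (fst z0))})"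
      proof -
        have "finite {x. x1 \<le> x \<and> x \<le> x1 + t \<and> a dvd (x - fst (fst z0))}"
          by (rule finite_subset[of _ "{x1..x1+t}"]) auto
        from card_mono[OF this sub] show ?thesis by simp
      qed
      also have "\<dots> \<le> real_of_int t / real_of_int a + 1" by (rule card_multiples[OF a1 t0])
      finally show ?thesis .
    qed
    have "real_of_int t / real_of_int a = real_of_int t * (real_of_int g / real_of_int dx)"
      using dxe gpos by simp
    moreover have "1 \<le> real_of_int s * (real_of_int g / real_of_int dx)"
    proof -
      have "s * 1 \<le> s * g" using h gpos by (intro mult_left_mono) auto
      then have "dx \<le> s * g" using h by linarith
      then have "real_of_int dx \<le> real_of_int s * real_of_int g"
        by (simp add: of_int_mult[symmetric] del: of_int_mult)
      then show ?thesis using h by (simp add: field_simps)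
    qed
    ultimately have "real_of_int t / real_of_int a + 1 \<le> real_of_int (t + s) * (real_of_int g / real_of_int dx)"
      by (simp only: of_int_add distrib_right)
    then show ?thesis using bound1 by (simp add: dd g_def)
  qed
  have "real (card {T. \<exists>p q r. T = {p, q, r} \<and> p \<noteq> q \<and> p \<in> A \<and> q \<in> A \<and> r \<in> R \<and> collinear3 p q r})
      \<le> real (\<Sum>d\<in>D. card (Rd d))"
    using \<open>card {T. _} \<le> card Tup\<close> cardTup by linarith
  also have "\<dots> = (\<Sum>d\<in>D. real (card (Rd d)))" by simp
  also have "\<dots> \<le> (\<Sum>d\<in>D. real_of_int (t + s) * (real_of_int (gcd (fst d) (snd d)) / real_of_int (fst d)))"
    by (intro sum_mono cardRd)
  also have "\<dots> = real_of_int (t + s) * (\<Sum>d\<in>D. real_of_int (gcd (fst d) (snd d)) / real_of_int (fst d))"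
    by (simp add: sum_distrib_left)
  finally show ?thesis unfolding D_def defs .
qed

lemma final_ineq:
  fixes t s X0 Y0 u sm s' P th c nn :: real
  assumes t: "0 \<le> t" "t \<le> u" and s: "0 \<le> s" "s \<le> sm" "sm \<le> s'"
    and s'1: "s' \<le> (51/100) * u" and s'2: "s' \<le> (1/200) * P"
    and X0: "X0 \<ge> P / 2" and Yhi: "Y0 + s \<le> P / th" and Y0: "Y0 \<ge> 100 * s' + 101 * u"
    and th: "th \<ge> 100 * c" and c: "c \<ge> 12" and nn: "nn \<ge> 1" "nn + 1 \<le> (101/100) * nn"
    and u: "u = P / (c * nn * th)" and P: "P > 0"
  shows "(t + s) * s * ((Y0 + s) / (X0 - s))^2 * (((X0 + t) / (Y0 - t) - (X0 - s) / (Y0 + s)) * (nn + 1) + 2)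
         \<le> 8 * u * sm / (c * th)"
proof -
  define E where "E = t + s"
  define Xlo where "Xlo = X0 - s"
  define Yhi where "Yhi = Y0 + s"
  define Ylo where "Ylo = Y0 - t"
  have thp: "th > 0" using th c by linarith
  have up: "u > 0" unfolding u using P thp c nn by simp
  have E: "0 \<le> E" "E \<le> (151/100) * u" using t s s'1 by (auto simp: E_def)
  have Xlo1: "Xlo \<ge> (99/100) * X0" using s s'2 X0 P by (simp add: Xlo_def)
  have Xlo2: "Xlo \<ge> (99/200) * P" using Xlo1 X0 by linarith
  have Xlop: "Xlo > 0" using Xlo2 P by linarith
  have Ylop: "Ylo > 0" using Y0 t s s'1 up by (simp add: Ylo_def)
  have YhY: "Yhi \<le> (101/100) * Ylo" using Y0 t s s'1 by (simp add: Ylo_def Yhi_def)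
  have Yhip: "Yhi > 0" using Ylop t s by (simp add: Ylo_def Yhi_def)
  have X0Y0: "X0 + Y0 \<le> (51/50) * X0"
  proof -
    have "P / th \<le> P / (100 * c)" using th P c by (intro divide_left_mono) auto
    also have "\<dots> \<le> P / 100" using c P by (intro divide_left_mono) auto
    finally have "Y0 \<le> P / 100" using Yhi s by linarith
    then show ?thesis using X0 by linarith
  qed
  have X0p: "X0 > 0" using X0 P by linarith
  have iden: "(Yhi / Xlo)^2 * ((X0 + t) / Ylo - Xlo / Yhi) = (Yhi / Ylo) * E * ((X0 + Y0) / Xlo) * (1 / Xlo)"
  proof -
    have num: "(X0 + t) * Yhi - Xlo * Ylo = E * (X0 + Y0)"
      unfolding E_def Xlo_def Ylo_def Yhi_def by (simp add: algebra_simps)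
    have "(X0 + t) / Ylo - Xlo / Yhi = ((X0 + t) * Yhi - Xlo * Ylo) / (Ylo * Yhi)"
      using Ylop Yhip by (simp add: field_simps)
    also have "\<dots> = E * (X0 + Y0) / (Ylo * Yhi)" using num by simp
    finally have "(Yhi / Xlo)^2 * ((X0 + t) / Ylo - Xlo / Yhi) = (Yhi / Xlo)^2 * (E * (X0 + Y0) / (Ylo * Yhi))" by simp
    also have "\<dots> = (Yhi / Ylo) * E * ((X0 + Y0) / Xlo) * (1 / Xlo)"
      using Xlop Ylop Yhip by (simp add: field_simps power2_eq_square)
    finally show ?thesis .
  qed
  have f1: "Yhi / Ylo \<le> (101/100)" using YhY Ylop by (simp add: divide_le_eq)
  have f2: "(X0 + Y0) / Xlo \<le> (26/25)"
  proof -
    have "X0 + Y0 \<le> (26/25) * ((99/100) * X0)" using X0Y0 X0p by linarith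
    also have "\<dots> \<le> (26/25) * Xlo" using Xlo1 by linarith
    finally show ?thesis using Xlop by (simp add: divide_le_eq)
  qed
  have f3: "1 / Xlo \<le> (203/100) / P"
  proof -
    have "1 * P \<le> (203/100) * Xlo" using Xlo2 P by linarith
    then show ?thesis using Xlop P by (simp add: divide_le_eq le_divide_eq field_simps)
  qed
  have X0Yp: "X0 + Y0 \<ge> 0" using X0p Y0 up s'1 s by linarith
  have Q: "(Yhi / Xlo)^2 * ((X0 + t) / Ylo - Xlo / Yhi) \<le> (101/100) * E * (26/25) * ((203/100) / P)"
    unfolding iden
    using f1 f2 f3 E Xlop Ylop Yhip X0Yp
    by (intro mult_mono) (auto intro!: mult_nonneg_nonneg divide_nonneg_nonneg)
  have Qnn: "(Yhi / Xlo)^2 * ((X0 + t) / Ylo - Xlo / Yhi) \<ge> 0"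
    unfolding iden using E Xlop Ylop Yhip X0Yp by (auto intro!: mult_nonneg_nonneg divide_nonneg_nonneg)
  define q where "q = (Yhi / Xlo)^2 * ((X0 + t) / Ylo - Xlo / Yhi)"
  define qb where "qb = (101/100) * E * (26/25) * ((203/100) / P)"
  have qq: "q \<le> qb" "0 \<le> q" using Q Qnn by (simp_all add: q_def qb_def)
  have es: "E * s \<le> E * sm" using E s by (intro mult_left_mono) auto
  have "E * s * q \<le> E * sm * qb"
    using es qq E s by (intro mult_mono) auto
  moreover have "0 \<le> E * sm * qb" using E s P unfolding qb_def by auto
  ultimately have "E * s * q * (nn + 1) \<le> E * sm * qb * ((101/100) * nn)"
    using nn qq E s by (intro mult_mono) auto
  then have T1: "E * s * ((Yhi / Xlo)^2 * ((X0 + t) / Ylo - Xlo / Yhi)) * (nn + 1)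
      \<le> E * sm * ((101/100) * E * (26/25) * ((203/100) / P)) * ((101/100) * nn)"
    unfolding q_def qb_def by simp
  also have "\<dots> = (26920439/12500000) * (E * E) * sm * nn / P" by (simp add: field_simps)
  also have "\<dots> \<le> (26920439/12500000) * (((151/100) * u) * ((151/100) * u)) * sm * nn / P"
    using E s nn P by (intro divide_right_mono mult_right_mono mult_left_mono mult_mono) auto
  also have "\<dots> = (26920439/12500000) * (22801/10000) * u * sm * (u * nn / P)" by (simp add: field_simps)
  also have "u * nn / P = 1 / (c * th)" unfolding u using P nn thp c by (simp add: field_simps)
  finally have T1a: "E * s * ((Yhi / Xlo)^2 * ((X0 + t) / Ylo - Xlo / Yhi)) * (nn + 1)
      \<le> ((26920439/12500000) * (22801/10000)) * (u * sm * (1 / (c * th)))" by (simp add: mult.assoc)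
  have "0 \<le> u * sm * (1 / (c * th))" using up s thp c by simp
  then have "((26920439/12500000) * (22801/10000)) * (u * sm * (1 / (c * th))) \<le> (123/25) * (u * sm * (1 / (c * th)))"
    by (intro mult_right_mono) auto
  with T1a have T1': "E * s * ((Yhi / Xlo)^2 * ((X0 + t) / Ylo - Xlo / Yhi)) * (nn + 1) \<le> (123/25) * (u * sm * (1 / (c * th)))"
    by linarith
  have K: "(Yhi / Xlo)^2 \<le> ((203/100) / th)^2"
  proof -
    have "Yhi / Xlo \<le> (P / th) / ((99/200) * P)"
      using Yhi Yhip Xlo2 P thp unfolding Yhi_def[symmetric]
      by (intro frac_le) auto
    also have "\<dots> \<le> (203/100) / th" using P thp by (simp add: field_simps)
    finally show ?thesis using Yhip Xlop by (intro power_mono) auto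
  qed
  have T2: "E * s * ((Yhi / Xlo)^2 * 2) \<le> ((151/100) * u) * sm * (((203/100) / th)^2 * 2)"
    using E s K by (intro mult_mono) (auto intro!: mult_nonneg_nonneg)
  also have "\<dots> = ((151/100) * 2 * (203/100)^2) * u * sm / (th * th)" by (simp add: field_simps power2_eq_square)
  also have "\<dots> \<le> ((151/100) * 2 * (203/100)^2) * u * sm / (100 * c * th)"
    using th thp c up s by (intro divide_left_mono mult_right_mono mult_pos_pos) auto
  also have "\<dots> = ((151/100) * 2 * (203/100)^2 / 100) * (u * sm * (1 / (c * th)))" by (simp add: field_simps)
  also have "\<dots> \<le> (13/100) * (u * sm * (1 / (c * th)))"
    using up s thp c by (intro mult_right_mono) (auto simp: power2_eq_square)
  finally have T2': "E * s * ((Yhi / Xlo)^2 * 2) \<le> (13/100) * (u * sm * (1 / (c * th)))" .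
  have "(t + s) * s * ((Y0 + s) / (X0 - s))^2 * (((X0 + t) / (Y0 - t) - (X0 - s) / (Y0 + s)) * (nn + 1) + 2)
      = E * s * (Yhi / Xlo)^2 * (((X0 + t) / Ylo - Xlo / Yhi) * (nn + 1) + 2)"
    by (simp add: E_def Xlo_def Yhi_def Ylo_def)
  also have "\<dots> = E * s * ((Yhi / Xlo)^2 * ((X0 + t) / Ylo - Xlo / Yhi)) * (nn + 1) + E * s * ((Yhi / Xlo)^2 * 2)"
  proof -
    define A where "A = (Yhi / Xlo)^2"
    define B where "B = (X0 + t) / Ylo - Xlo / Yhi"
    show ?thesis unfolding A_def[symmetric] B_def[symmetric] by (simp add: algebra_simps)
  qed
  also have "\<dots> \<le> (123/25) * (u * sm * (1 / (c * th))) + (13/100) * (u * sm * (1 / (c * th)))" using T1' T2' by linarith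
  also have "\<dots> \<le> 8 * (u * sm * (1 / (c * th)))" using up s thp c by (simp add: field_simps)
  also have "\<dots> = 8 * u * sm / (c * th)" by simp
  finally show ?thesis .
qed

lemma pn_props:
  assumes "side eps c n \<ge> 4"
  shows "prime (pn eps c n)" "3 \<le> pn eps c n" "pn eps c n < side eps c n"
proof -
  define Q where "Q = {q::int. prime q \<and> q < side eps c n}"
  have finQ: "finite Q"
    by (rule finite_subset[of _ "{0..side eps c n}"]) (auto simp: Q_def dest: prime_gt_0_int)
  have 3: "(3::int) \<in> Q" using assms by (simp add: Q_def)
  define M where "M = Max Q"
  have MQ: "M \<in> Q" unfolding M_def using finQ 3 by (intro Max_in) auto
  have Mge: "q \<le> M" if "q \<in> Q" for q unfolding M_def using finQ that by simp
  have "pn eps c n = M" unfolding pn_def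
    using MQ Mge by (intro Greatest_equality) (auto simp: Q_def)
  then show "prime (pn eps c n)" "3 \<le> pn eps c n" "pn eps c n < side eps c n"
    using MQ Mge[OF 3] by (auto simp: Q_def)
qed

lemma parab_elem:
  assumes "z \<in> parab eps c n a b"
  obtains x y where "z = (2 ^ n + x, Yn eps n - y)" "0 \<le> x" "x < pn eps c n" "0 \<le> y" "y < pn eps c n"
    "y mod pn eps c n = ((x - a)^2 + b) mod pn eps c n"
  using assms unfolding parab_def by blast

lemma parab_distx:
  assumes "p \<in> parab eps c n a b" "q \<in> parab eps c n a b" "fst p = fst q"
  shows "p = q"
proof -
  obtain x y where p: "p = (2 ^ n + x, Yn eps n - y)" "0 \<le> x" "x < pn eps c n" "0 \<le> y" "y < pn eps c n"
    "y mod pn eps c n = ((x - a)^2 + b) mod pn eps c n" using parab_elem[OF assms(1)] by blast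
  obtain x' y' where q: "q = (2 ^ n + x', Yn eps n - y')" "0 \<le> x'" "x' < pn eps c n" "0 \<le> y'" "y' < pn eps c n"
    "y' mod pn eps c n = ((x' - a)^2 + b) mod pn eps c n" using parab_elem[OF assms(2)] by blast
  have "x = x'" using assms(3) p q by simp
  then have "y mod pn eps c n = y' mod pn eps c n" using p q by simp
  then have "y = y'" using p q by simp
  then show ?thesis using p q \<open>x = x'\<close> by simp
qed

lemma parab_uniq:
  assumes P: "prime (pn eps c n)" "3 \<le> pn eps c n"
    and mem: "p \<in> parab eps c n a b" "q \<in> parab eps c n a b" "p' \<in> parab eps c n a b" "q' \<in> parab eps c n a b"
    and lt: "fst p < fst q"
    and e1: "fst q - fst p = fst q' - fst p'" and e2: "snd q - snd p = snd q' - snd p'"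
  shows "p = p'"
proof -
  define P where "P = pn eps c n"
  define f where "f = (\<lambda>x::int. (x - a)^2 + b)"
  obtain x1 y1 where p: "p = (2 ^ n + x1, Yn eps n - y1)" "0 \<le> x1" "x1 < P" "0 \<le> y1" "y1 < P"
    "P dvd (y1 - f x1)" using parab_elem[OF mem(1)] unfolding P_def f_def by (metis mod_eq_dvd_iff)
  obtain x2 y2 where q: "q = (2 ^ n + x2, Yn eps n - y2)" "0 \<le> x2" "x2 < P" "0 \<le> y2" "y2 < P"
    "P dvd (y2 - f x2)" using parab_elem[OF mem(2)] unfolding P_def f_def by (metis mod_eq_dvd_iff)
  obtain x3 y3 where p': "p' = (2 ^ n + x3, Yn eps n - y3)" "0 \<le> x3" "x3 < P" "0 \<le> y3" "y3 < P"
    "P dvd (y3 - f x3)" using parab_elem[OF mem(3)] unfolding P_def f_def by (metis mod_eq_dvd_iff)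
  obtain x4 y4 where q': "q' = (2 ^ n + x4, Yn eps n - y4)" "0 \<le> x4" "x4 < P" "0 \<le> y4" "y4 < P"
    "P dvd (y4 - f x4)" using parab_elem[OF mem(4)] unfolding P_def f_def by (metis mod_eq_dvd_iff)
  define dx where "dx = x2 - x1"
  have dx: "0 < dx" "dx < P" using lt p q by (auto simp: dx_def)
  have x4: "x4 = x3 + dx" using e1 p q p' q' by (simp add: dx_def)
  have ye: "y2 - y1 = y4 - y3" using e2 p q p' q' by simp
  have "P dvd ((y2 - f x2) - (y1 - f x1) - (y4 - f x4) + (y3 - f x3))"
    by (rule dvd_add[OF dvd_diff[OF dvd_diff[OF q(6) p(6)] q'(6)] p'(6)])
  moreover have "(y2 - f x2) - (y1 - f x1) - (y4 - f x4) + (y3 - f x3) = - (2 * dx * (x1 - x3))"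
  proof -
    have x2e: "x2 = x1 + dx" by (simp add: dx_def)
    show ?thesis using ye unfolding f_def x4 x2e by algebra
  qed
  ultimately have "P dvd 2 * dx * (x1 - x3)" by simp
  then have "P dvd 2 \<or> P dvd dx \<or> P dvd (x1 - x3)" using P unfolding P_def[symmetric]
    by (simp add: prime_dvd_mult_iff)
  moreover have "\<not> P dvd 2"
  proof
    assume "P dvd 2"
    then have "P \<le> 2" by (rule zdvd_imp_le) auto
    then show False using P unfolding P_def by simp
  qed
  moreover have "\<not> P dvd dx"
  proof
    assume "P dvd dx"
    then have "P \<le> dx" using dx by (intro zdvd_imp_le) auto
    then show False using dx by simp
  qed
  ultimately have "P dvd (x1 - x3)" by blast
  moreover have "\<bar>x1 - x3\<bar> < P" using p p' by auto
  ultimately have "x1 = x3" using dvd_imp_le_int[of "x1 - x3" P] by (cases "x1 - x3 = 0") auto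
  then have "P dvd (y1 - y3)" using p(6) p'(6) by (metis dvd_diff diff_diff_eq2 diff_add_cancel diff_diff_cancel)
  then have "y1 = y3" using p p' dvd_imp_le_int[of "y1 - y3" P] by (cases "y1 - y3 = 0") auto
  then show ?thesis using p p' \<open>x1 = x3\<close> by simp
qed

definition sig :: "real \<Rightarrow> real \<Rightarrow> nat \<Rightarrow> real" where
  "sig eps c n = 2 ^ n / (c * real n powr (1 + eps))"

lemma mono_from:
  fixes f :: "nat \<Rightarrow> real"
  assumes "\<And>k. K \<le> k \<Longrightarrow> f k \<le> f (Suc k)" "K \<le> k" "k \<le> l"
  shows "f k \<le> f l"
  using assms(3)
proof (induction l rule: dec_induct)
  case base then show ?case by simp
next
  case (step l) then show ?case using assms(1)[of l] assms(2) by linarith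
qed

lemma ratio_powr_le:
  fixes k :: nat and e :: real
  assumes "k \<ge> 1" "0 \<le> e" "e \<le> 2"
  shows "real (Suc k) powr e \<le> (1 + 1 / real k)^2 * real k powr e"
proof -
  have kp: "real k > 0" using assms by simp
  have "real (Suc k) = (1 + 1 / real k) * real k" using kp by (simp add: field_simps)
  then have "real (Suc k) powr e = (1 + 1 / real k) powr e * real k powr e"
    by (simp add: powr_mult)
  also have "(1 + 1 / real k) powr e \<le> (1 + 1 / real k) powr 2"
    using assms by (intro powr_mono) auto
  also have "(1 + 1 / real k) powr 2 = (1 + 1 / real k)^2"
    by (simp add: powr_realpow)
  finally show ?thesis using kp by (simp add: mult_right_mono)
qed

lemma mono_sig:
  assumes "0 < eps" "eps < 1" "c > 0" "3 \<le> k" "k \<le> l"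
  shows "sig eps c k \<le> sig eps c l"
proof (rule mono_from[of 3 "sig eps c"])
  fix k :: nat assume k: "3 \<le> k"
  have kp: "real k \<ge> 3" using k by simp
  have "(1 + 1 / real k)^2 \<le> (1 + 1/3)^2"
    using kp by (intro power_mono) (auto simp: field_simps)
  also have "\<dots> \<le> 2" by (simp add: power2_eq_square)
  finally have r: "(1 + 1 / real k)^2 \<le> 2" .
  have "real (Suc k) powr (1 + eps) \<le> (1 + 1 / real k)^2 * real k powr (1 + eps)"
    using k assms by (intro ratio_powr_le) auto
  also have "\<dots> \<le> 2 * real k powr (1 + eps)" using r by (intro mult_right_mono) auto
  finally have A: "real (Suc k) powr (1 + eps) \<le> 2 * real k powr (1 + eps)" .
  have pos: "real k powr (1 + eps) > 0" using kp by simp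
  have "2 ^ k / (c * real k powr (1 + eps)) = 2 ^ Suc k / (c * (2 * real k powr (1 + eps)))"
    using assms by (simp add: field_simps)
  also have "\<dots> \<le> 2 ^ Suc k / (c * real (Suc k) powr (1 + eps))"
    using A assms pos by (intro divide_left_mono mult_left_mono mult_pos_pos) auto
  finally show "sig eps c k \<le> sig eps c (Suc k)" by (simp add: sig_def)
qed (use assms in auto)

lemma mono_g:
  assumes "0 < eps" "eps < 1" "1 \<le> k" "k \<le> l"
  shows "2 ^ k / real k powr eps \<le> 2 ^ l / real l powr eps"
proof (rule mono_from[of 1 "\<lambda>k. 2 ^ k / real k powr eps"])
  fix k :: nat assume k: "1 \<le> k"
  have kp: "real k \<ge> 1" using k by simp
  have "(1 + 1 / real k)^2 \<le> (1 + 1)^2"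
    using kp by (intro power_mono) (auto simp: field_simps)
  then have r: "(1 + 1 / real k)^2 \<le> 4" by simp
  have "real (Suc k) powr eps \<le> (1 + 1 / real k)^2 * real k powr eps"
    using k assms by (intro ratio_powr_le) auto
  \<comment> \<open>too weak (factor 4); use exponent eps directly\<close>
  have kp': "real k > 0" using kp by simp
  have "real (Suc k) = (1 + 1 / real k) * real k" using kp' by (simp add: field_simps)
  then have "real (Suc k) powr eps = (1 + 1 / real k) powr eps * real k powr eps"
    by (simp add: powr_mult)
  also have "(1 + 1 / real k) powr eps \<le> (1 + 1 / real k) powr 1"
    using assms by (intro powr_mono) auto
  also have "(1 + 1 / real k) powr 1 \<le> 2" using kp by (simp add: field_simps)
  finally have A: "real (Suc k) powr eps \<le> 2 * real k powr eps" using kp' by (simp add: mult_right_mono)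
  have pos: "real k powr eps > 0" using kp by simp
  have "2 ^ k / real k powr eps = 2 ^ Suc k / (2 * real k powr eps)" by simp
  also have "\<dots> \<le> 2 ^ Suc k / real (Suc k) powr eps"
    using A pos by (intro divide_left_mono) auto
  finally show "2 ^ k / real k powr eps \<le> 2 ^ Suc k / real (Suc k) powr eps" .
qed (use assms in auto)

lemma asym_N0:
  assumes "0 < eps" "eps < 1" "c > 0"
  shows "eventually (\<lambda>m::nat. 4 \<le> 2 ^ m / (c * real m powr (1 + eps))) at_top"
  using assms by real_asymp

lemma asym_n:
  assumes "0 < eps" "eps < 1" "c > 0"
  shows "eventually (\<lambda>n::nat. real n powr eps \<ge> 100 * c
     \<and> sig eps c (n - 1) \<le> (51/100) * sig eps c n
     \<and> sig eps c (n - 1) \<le> (1/200) * 2 ^ n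
     \<and> 2 ^ n / real n powr eps - 1 - 2 ^ (n - 1) / real (n - 1) powr eps \<ge> 100 * sig eps c (n - 1) + 101 * sig eps c n
     \<and> real n + 1 \<le> (101/100) * real n) at_top"
proof -
  have 1: "eventually (\<lambda>n::nat. real n powr eps \<ge> 100 * c) at_top" using assms by real_asymp
  have 2: "eventually (\<lambda>n::nat. 2 ^ (n - 1) / (c * real (n - 1) powr (1 + eps)) \<le> (51/100) * (2 ^ n / (c * real n powr (1 + eps)))) at_top"
    using assms by real_asymp
  have 3: "eventually (\<lambda>n::nat. 2 ^ (n - 1) / (c * real (n - 1) powr (1 + eps)) \<le> (1/200) * 2 ^ n) at_top"
    using assms by real_asymp
  have 4: "eventually (\<lambda>n::nat. 2 ^ n / real n powr eps - 1 - 2 ^ (n - 1) / real (n - 1) powr eps \<ge>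
      100 * (2 ^ (n - 1) / (c * real (n - 1) powr (1 + eps))) + 101 * (2 ^ n / (c * real n powr (1 + eps)))) at_top"
    using assms by real_asymp
  have 5: "eventually (\<lambda>n::nat. real n + 1 \<le> (101/100) * real n) at_top" by real_asymp
  show ?thesis using eventually_conj[OF 1 eventually_conj[OF 2 eventually_conj[OF 3 eventually_conj[OF 4 5]]]]
    by (simp add: sig_def)
qed

lemma Qlat_finite: "finite (Qlat eps c n)"
proof -
  have "Qlat eps c n \<subseteq> {2^n..2^n + side eps c n} \<times> {Yn eps n - side eps c n..Yn eps n}"
    unfolding Qlat_def by auto
  then show ?thesis by (rule finite_subset) auto
qed

lemma target_eq:
  fixes eps c :: real and m n :: nat
  assumes "m > 0" "n > 0" "c > 0"
  shows "8 * 2 ^ (m + n) / (c ^ 3 * real n powr (2 + 2 * eps) * real m powr (1 + eps)) * real n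
    = 8 * sig eps c n * sig eps c m / (c * real n powr eps)"
proof -
  have q: "real n powr (1 + eps) = real n * real n powr eps" using assms by (simp add: powr_add)
  have q2: "real n powr (2 + 2 * eps) = real n powr (1 + eps) * real n powr (1 + eps)"
    using assms by (simp add: powr_add[symmetric])
  have pos: "real n powr eps > 0" "real m powr (1 + eps) > 0" using assms by auto
  show ?thesis unfolding sig_def q2 q using assms pos
    by (simp add: field_simps power_add power2_eq_square power3_eq_cube)
qed

theorem lemma3p6:
  fixes eps c :: real
  assumes "0 < eps" "eps < 1" "c \<ge> 12 / eps"
  shows "\<exists>N0. \<forall>n0\<ge>N0. \<forall>S. construction eps c n0 S \<longrightarrow>
           (\<exists>N. \<forall>m n. n0 \<le> m \<and> m < n \<and> N \<le> n \<longrightarrow>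
              real (card (cross_triples eps c S m n))
                \<le> 8 * 2 ^ (m + n) / (c ^ 3 * real n powr (2 + 2 * eps) * real m powr (1 + eps))
                  * real n)"
proof -
  have c12: "c \<ge> 12"
  proof -
    have "12 \<le> 12 / eps" using assms by (simp add: le_divide_eq)
    then show ?thesis using assms by linarith
  qed
  have cp: "c > 0" using c12 by linarith
  obtain N0' where N0': "\<And>m. m \<ge> N0' \<Longrightarrow> 4 \<le> 2 ^ m / (c * real m powr (1 + eps))"
    using asym_N0[OF assms(1,2) cp] unfolding eventually_sequentially by blast
  have side4: "side eps c m \<ge> 4" if "m \<ge> N0'" for m
    using N0'[OF that] unfolding side_def by (simp add: le_floor_iff)
  obtain N1 where N1: "\<And>n. n \<ge> N1 \<Longrightarrow> real n powr eps \<ge> 100 * c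
     \<and> sig eps c (n - 1) \<le> (51/100) * sig eps c n
     \<and> sig eps c (n - 1) \<le> (1/200) * 2 ^ n
     \<and> 2 ^ n / real n powr eps - 1 - 2 ^ (n - 1) / real (n - 1) powr eps \<ge> 100 * sig eps c (n - 1) + 101 * sig eps c n
     \<and> real n + 1 \<le> (101/100) * real n"
    using asym_n[OF assms(1,2) cp] unfolding eventually_sequentially by blast
  show ?thesis
  proof (rule exI[of _ "max N0' 3"], intro allI impI)
    fix n0 S assume n0: "max N0' 3 \<le> n0" and constr: "construction eps c n0 S"
    from constr obtain a b :: "nat \<Rightarrow> int" and f :: "nat \<Rightarrow> (int \<times> int) set \<Rightarrow> int \<times> int" where
      H: "\<forall>n\<ge>n0. let Slt = S \<inter> (\<Union>k\<in>{n0..<n}. Qlat eps c k);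
            P = parab eps c n (a n) (b n);
            M = mixed_triples P Slt
        in 0 \<le> a n \<and> a n < pn eps c n \<and> 0 \<le> b n \<and> b n < pn eps c n
           \<and> (\<forall>a' b'. 0 \<le> a' \<and> a' < pn eps c n \<and> 0 \<le> b' \<and> b' < pn eps c n \<longrightarrow>
                 card M \<le> card (mixed_triples (parab eps c n a' b') Slt))
           \<and> (\<forall>T\<in>M. f n T \<in> T \<inter> P)
           \<and> S \<inter> Qlat eps c n = P - f n ` M"
      unfolding construction_def by blast
    have Spar: "S \<inter> Qlat eps c m \<subseteq> parab eps c m (a m) (b m)" if "m \<ge> n0" for m
      using H that by (auto simp: Let_def)
    show "\<exists>N. \<forall>m n. n0 \<le> m \<and> m < n \<and> N \<le> n \<longrightarrow>
              real (card (cross_triples eps c S m n))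
                \<le> 8 * 2 ^ (m + n) / (c ^ 3 * real n powr (2 + 2 * eps) * real m powr (1 + eps)) * real n"
    proof (rule exI[of _ N1], intro allI impI)
      fix m n assume mn: "n0 \<le> m \<and> m < n \<and> N1 \<le> n"
      have m0: "n0 \<le> m" "m < n" "N1 \<le> n" using mn by auto
      have m3: "3 \<le> m" "N0' \<le> m" using n0 m0 by auto
      have n3: "N0' \<le> n" "1 \<le> n" using m3 m0 by auto
      define s where "s = side eps c m"
      define t where "t = side eps c n"
      define A where "A = S \<inter> Qlat eps c m"
      have s4: "s \<ge> 4" using side4[OF m3(2)] by (simp add: s_def)
      have t4: "t \<ge> 4" using side4[OF n3(1)] by (simp add: t_def)
      have P: "prime (pn eps c m)" "3 \<le> pn eps c m" using pn_props[OF side4[OF m3(2)]] by auto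
      have Apar: "A \<subseteq> parab eps c m (a m) (b m)" using Spar[of m] m0 by (simp add: A_def)
      have finA: "finite A" using Qlat_finite[of eps c m] by (simp add: A_def)
      have Abox: "\<And>p. p \<in> A \<Longrightarrow> 2^m \<le> fst p \<and> fst p \<le> 2^m + s \<and> Yn eps m - s \<le> snd p \<and> snd p \<le> Yn eps m"
        by (auto simp: A_def Qlat_def s_def)
      have Rdef: "Qlat eps c n = {(x, y). 2^n \<le> x \<and> x \<le> 2^n + t \<and> Yn eps n - t \<le> y \<and> y \<le> Yn eps n}"
        by (simp add: Qlat_def t_def)
      have distx: "\<And>p q. p \<in> A \<Longrightarrow> q \<in> A \<Longrightarrow> fst p = fst q \<Longrightarrow> p = q"
        using Apar parab_distx by blast
      have uniq: "\<And>p q p' q'. p \<in> A \<Longrightarrow> q \<in> A \<Longrightarrow> p' \<in> A \<Longrightarrow> q' \<in> A \<Longrightarrow> fst p < fst q \<Longrightarrow>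
                 fst q - fst p = fst q' - fst p' \<Longrightarrow> snd q - snd p = snd q' - snd p' \<Longrightarrow> p = p'"
      proof -
        fix p q p' q' assume h: "p \<in> A" "q \<in> A" "p' \<in> A" "q' \<in> A" "fst p < fst q"
          "fst q - fst p = fst q' - fst p'" "snd q - snd p = snd q' - snd p'"
        show "p = p'" using parab_uniq[OF P, of p "a m" "b m" q p' q'] h Apar by blast
      qed
      define th where "th = real n powr eps"
      define sn where "sn = sig eps c n"
      define sm where "sm = sig eps c m"
      define s' where "s' = sig eps c (n - 1)"
      have N1n: "th \<ge> 100 * c" "s' \<le> (51/100) * sn" "s' \<le> (1/200) * 2 ^ n"
        "2 ^ n / th - 1 - 2 ^ (n - 1) / real (n - 1) powr eps \<ge> 100 * s' + 101 * sn"
        "real n + 1 \<le> (101/100) * real n"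
        using N1[OF m0(3)] unfolding th_def sn_def s'_def by (blast, blast, blast, blast, blast)
      have thp: "th > 0" using n3 by (simp add: th_def)
      have tsn: "real_of_int t \<le> sn" unfolding t_def side_def sn_def sig_def by (rule of_int_floor_le)
      have ssm: "real_of_int s \<le> sm" unfolding s_def side_def sm_def sig_def by (rule of_int_floor_le)
      have sms': "sm \<le> s'" unfolding sm_def s'_def using mono_sig[OF assms(1,2) cp, of m "n - 1"] m3 m0 by auto
      have Ym: "real_of_int (Yn eps m) \<le> 2 ^ (n - 1) / real (n - 1) powr eps"
      proof -
        have "real_of_int (Yn eps m) \<le> 2 ^ m / real m powr eps" unfolding Yn_def by (rule of_int_floor_le)
        also have "\<dots> \<le> 2 ^ (n - 1) / real (n - 1) powr eps" using mono_g[OF assms(1,2), of m "n - 1"] m3 m0 by auto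
        finally show ?thesis .
      qed
      have Yn1: "real_of_int (Yn eps n) \<ge> 2 ^ n / th - 1" unfolding Yn_def th_def by linarith
      have Yn2: "real_of_int (Yn eps n) \<le> 2 ^ n / th" unfolding Yn_def th_def by (rule of_int_floor_le)
      have sY: "s \<le> Yn eps m"
      proof -
        have mp: "real m powr eps > 0" "real m \<ge> 1" using m3 by auto
        have e: "real m powr (1 + eps) = real m * real m powr eps" using m3 by (simp add: powr_add)
        have "real m powr eps = 1 * (1 * real m powr eps)" by simp
        also have "\<dots> \<le> c * (real m * real m powr eps)"
          using c12 mp by (intro mult_mono) auto
        finally have "real m powr eps \<le> c * real m powr (1 + eps)" using e by simp
        then have "2 ^ m / (c * real m powr (1 + eps)) \<le> 2 ^ m / real m powr eps"
          using mp cp by (intro divide_left_mono) auto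
        then show ?thesis unfolding s_def side_def Yn_def by (intro floor_mono)
      qed
      have sn_eq: "sn = 2 ^ n / (c * real n * th)"
        unfolding sn_def sig_def th_def using n3 by (simp add: powr_add mult.assoc)
      have snp: "sn > 0" using sn_eq cp thp n3 by simp
      have X0: "(2::real) ^ n - 2 ^ m \<ge> 2 ^ n / 2"
      proof -
        have "(2::real) ^ m \<le> 2 ^ (n - 1)" using m0 by (intro power_increasing) auto
        moreover have "(2::real) ^ n = 2 * 2 ^ (n - 1)" using n3 by (simp add: power_Suc[symmetric])
        ultimately show ?thesis by simp
      qed
      have Y0: "real_of_int (Yn eps n) - real_of_int (Yn eps m) \<ge> 100 * s' + 101 * sn"
        using Yn1 Ym N1n(4) by linarith
      have Yhi_r: "real_of_int (Yn eps n) - real_of_int (Yn eps m) + real_of_int s \<le> 2 ^ n / th"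
        using Yn2 sY by (simp add: of_int_le_iff[symmetric])
      have s0: "s \<ge> 0" "t \<ge> 0" using s4 t4 by auto
      have p2: "(0::real) < 2 ^ n" by simp
      have cv1: "real_of_int (2 ^ n - 2 ^ m - s) = 2 ^ n - 2 ^ m - real_of_int s" by simp
      have cv2: "real_of_int (Yn eps n - t - Yn eps m) = real_of_int (Yn eps n) - real_of_int (Yn eps m) - real_of_int t" by simp
      have cv3: "real_of_int (Yn eps n - Yn eps m + s) = real_of_int (Yn eps n) - real_of_int (Yn eps m) + real_of_int s" by simp
      have r1: "(0::real) < real_of_int (2 ^ n - 2 ^ m - s)"
        unfolding cv1 using X0 ssm sms' N1n(3) p2 by linarith
      have Xlo: "2 ^ n - 2 ^ m - s > 0" using r1 by (simp only: of_int_0_less_iff)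
      have s0r: "0 \<le> real_of_int s" using s0 by simp
      have r2: "(0::real) < real_of_int (Yn eps n - t - Yn eps m)"
        unfolding cv2 using Y0 tsn snp ssm sms' s0r by linarith
      have Ylo: "Yn eps n - t - Yn eps m > 0" using r2 by (simp only: of_int_0_less_iff)
      have thc: "2 ^ n / th \<le> 2 ^ n / 1200"
      proof -
        have "1200 \<le> th" using N1n(1) c12 by linarith
        then show ?thesis using thp by (intro divide_left_mono) auto
      qed
      have r3: "real_of_int (Yn eps n - Yn eps m + s) \<le> real_of_int (2 ^ n - 2 ^ m - s)"
        unfolding cv1 cv3 using Yhi_r thc X0 ssm sms' N1n(3) p2 by linarith
      have YX: "Yn eps n - Yn eps m + s \<le> 2 ^ n - 2 ^ m - s" using r3 by (simp only: of_int_le_iff)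
      have r4: "real_of_int s \<le> real_of_int ((2::int) ^ n)"
      proof -
        have "real_of_int ((2::int) ^ n) = 2 ^ n" by simp
        then show ?thesis using ssm sms' N1n(3) p2 by linarith
      qed
      have s2n: "s \<le> 2 ^ n" using r4 by (simp only: of_int_le_iff)
      have cross_eq: "cross_triples eps c S m n = {T. \<exists>p q r. T = {p, q, r} \<and> p \<noteq> q \<and> p \<in> A \<and> q \<in> A \<and> r \<in> Qlat eps c n \<and> collinear3 p q r}"
        unfolding cross_triples_def A_def by simp
      define D where "D = {(dx,dy). 1 \<le> dx \<and> dx \<le> s \<and> 1 \<le> dy \<and> dy*(2 ^ n - 2 ^ m - s) \<le> dx*(Yn eps n - Yn eps m + s) \<and> dx*(Yn eps n - t - Yn eps m) \<le> dy*(2 ^ n + t - 2 ^ m)}"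
      define SS where "SS = (\<Sum>b\<in>{1..s}. \<Sum>a\<in>{a. 1 \<le> a \<and> a \<le> s \<and> b*(2 ^ n - 2 ^ m - s) \<le> a*(Yn eps n - Yn eps m + s) \<and> a*(Yn eps n - t - Yn eps m) \<le> b*(2 ^ n + t - 2 ^ m)}. 1 / (real_of_int a)^2)"
      have B: "real (card (cross_triples eps c S m n)) \<le> real_of_int (t + s) * (\<Sum>d\<in>D. real_of_int (gcd (fst d) (snd d)) / real_of_int (fst d))"
        unfolding cross_eq D_def
        by (rule stepBC[OF finA Abox Rdef distx uniq Xlo Ylo s0(2) s0(1)])
      have Dd: "(\<Sum>d\<in>D. real_of_int (gcd (fst d) (snd d)) / real_of_int (fst d)) \<le> real_of_int s * SS"
        unfolding D_def SS_def by (rule stepD[OF Xlo Ylo YX s0(1)])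
      have Ee: "SS \<le> (real_of_int (Yn eps n - Yn eps m + s) / real_of_int (2 ^ n - 2 ^ m - s))^2 *
           ((real_of_int (2 ^ n + t - 2 ^ m) / real_of_int (Yn eps n - t - Yn eps m) - real_of_int (2 ^ n - 2 ^ m - s) / real_of_int (Yn eps n - Yn eps m + s)) * (real n + 1) + 2)"
        unfolding SS_def by (rule stepE[OF Xlo Ylo _ _ s2n]) (use s0 in auto)
      have "real_of_int (t + s) * (\<Sum>d\<in>D. real_of_int (gcd (fst d) (snd d)) / real_of_int (fst d)) \<le> real_of_int (t + s) * (real_of_int s * SS)"
        by (rule mult_left_mono[OF Dd]) (use s0 in simp)
      with B have "real (card (cross_triples eps c S m n)) \<le> real_of_int (t + s) * (real_of_int s * SS)"
        by linarith
      also have "\<dots> \<le> real_of_int (t + s) * (real_of_int s * ((real_of_int (Yn eps n - Yn eps m + s) / real_of_int (2 ^ n - 2 ^ m - s))^2 *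
           ((real_of_int (2 ^ n + t - 2 ^ m) / real_of_int (Yn eps n - t - Yn eps m) - real_of_int (2 ^ n - 2 ^ m - s) / real_of_int (Yn eps n - Yn eps m + s)) * (real n + 1) + 2)))"
        using Ee s0 by (intro mult_left_mono) auto
      also have "\<dots> = (real_of_int t + real_of_int s) * real_of_int s *
           (((real_of_int (Yn eps n) - real_of_int (Yn eps m)) + real_of_int s) / ((2 ^ n - 2 ^ m) - real_of_int s))^2 *
           ((((2 ^ n - 2 ^ m) + real_of_int t) / ((real_of_int (Yn eps n) - real_of_int (Yn eps m)) - real_of_int t)
              - ((2 ^ n - 2 ^ m) - real_of_int s) / ((real_of_int (Yn eps n) - real_of_int (Yn eps m)) + real_of_int s)) * (real n + 1) + 2)"
      proof -
        have cv4: "real_of_int (2 ^ n + t - 2 ^ m) = (2 ^ n - 2 ^ m) + real_of_int t" by simp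
        show ?thesis unfolding cv1 cv2 cv3 cv4 of_int_add by (simp only: mult.assoc of_int_diff)
      qed
      also have "\<dots> \<le> 8 * sn * sm / (c * th)"
      proof -
        have t0r: "0 \<le> real_of_int t" using s0 by simp
        have nn1: "real n \<ge> 1" using n3 by simp
        show ?thesis by (rule final_ineq[OF t0r tsn s0r ssm sms' N1n(2) N1n(3) X0 Yhi_r Y0 N1n(1) c12 nn1 N1n(5) sn_eq p2])
      qed
      also have "\<dots> = 8 * 2 ^ (m + n) / (c ^ 3 * real n powr (2 + 2 * eps) * real m powr (1 + eps)) * real n"
        unfolding sn_def sm_def th_def using target_eq[of m n c eps] m3 n3 cp by simp
      finally show "real (card (cross_triples eps c S m n))
                \<le> 8 * 2 ^ (m + n) / (c ^ 3 * real n powr (2 + 2 * eps) * real m powr (1 + eps)) * real n" .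
    qed
  qed
qed


end
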